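(* Let $Q$ be an admissible orientation of $\tilde{A}_n$ and $I$ a two-sided algebra ideal of $\Bbbk Q$. Then exactly one of the following holds: (a) $I$ is a linearized semigroup ideal; (b) $k=1$ and $I=\Bbbk(\omega+a\upsilon)$, where $\omega$ and $\upsilon$ are the two different maximal paths of $Q$ and $a\in\Bbbk\setminus\{0\}$.
   Context: $\Bbbk$ is an algebraically closed field. An admissible orientation of $\tilde A_n$ is a finite quiver $Q$ with $n$ vertices whose underlying undirected graph is a cycle, having no oriented cycle and at least one source; $k\ge1$ denotes the number of sources (= number of sinks). Paths include trivial paths $\varepsilon_x$; products of paths in $\Bbbk Q$ are concatenations when defined and $0$ otherwise. $\omega\le_J\upsilon$ means $\upsilon=\alpha\omega\beta$ for paths $\alpha,\beta$; maximal paths are the $\le_J$-maximal paths. A linearized semigroup ideal is an ideal of $\Bbbk Q$ spanned by a set $X$ of paths such that $\alpha\omega\beta\in X$ whenever $\omega\in X$ and $\alpha\omega\beta$ is a defined path. *)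

theory Defs
  imports "HOL-Computational_Algebra.Polynomial"
begin

definition alg_closed_field :: "'k::field itself \<Rightarrow> bool" where
  "alg_closed_field _ \<longleftrightarrow> (\<forall>p :: 'k poly. degree p > 0 \<longrightarrow> (\<exists>x. poly p x = 0))"

text \<open>A quiver: vertex set V, arrow set E, source map s, target map t.
  A path is a pair (x, es): start vertex x and a list of composable arrows
  (es = [] gives the trivial path at x).\<close>

definition is_path :: "'v set \<Rightarrow> 'e set \<Rightarrow> ('e \<Rightarrow> 'v) \<Rightarrow> ('e \<Rightarrow> 'v) \<Rightarrow> 'v \<times> 'e list \<Rightarrow> bool" where
  "is_path V E s t p \<longleftrightarrow> fst p \<in> V \<and> set (snd p) \<subseteq> E \<and>
     (snd p \<noteq> [] \<longrightarrow> s (hd (snd p)) = fst p) \<and>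
     (\<forall>i. Suc i < length (snd p) \<longrightarrow> t (snd p ! i) = s (snd p ! Suc i))"

definition pstart :: "'v \<times> 'e list \<Rightarrow> 'v" where
  "pstart p = fst p"

definition pend :: "('e \<Rightarrow> 'v) \<Rightarrow> 'v \<times> 'e list \<Rightarrow> 'v" where
  "pend t p = (if snd p = [] then fst p else t (last (snd p)))"

text \<open>Concatenation (first p, then q); only meaningful when pend p = pstart q.\<close>
definition pcat :: "'v \<times> 'e list \<Rightarrow> 'v \<times> 'e list \<Rightarrow> 'v \<times> 'e list" where
  "pcat p q = (fst p, snd p @ snd q)"

definition source_vertex :: "'v set \<Rightarrow> 'e set \<Rightarrow> ('e \<Rightarrow> 'v) \<Rightarrow> ('e \<Rightarrow> 'v) \<Rightarrow> 'v \<Rightarrow> bool" where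
  "source_vertex V E s t x \<longleftrightarrow> x \<in> V \<and> (\<forall>e\<in>E. t e \<noteq> x)"

definition num_sources :: "'v set \<Rightarrow> 'e set \<Rightarrow> ('e \<Rightarrow> 'v) \<Rightarrow> ('e \<Rightarrow> 'v) \<Rightarrow> nat" where
  "num_sources V E s t = card {x. source_vertex V E s t x}"

definition underlying_cycle :: "'v set \<Rightarrow> 'e set \<Rightarrow> ('e \<Rightarrow> 'v) \<Rightarrow> ('e \<Rightarrow> 'v) \<Rightarrow> nat \<Rightarrow> bool" where
  "underlying_cycle V E s t n \<longleftrightarrow> finite V \<and> card V = n \<and>
     (\<exists>vv :: nat \<Rightarrow> 'v. \<exists>aa :: nat \<Rightarrow> 'e. bij_betw vv {..<n} V \<and> bij_betw aa {..<n} E \<and>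
        (\<forall>i<n. {s (aa i), t (aa i)} = {vv i, vv (Suc i mod n)}))"

definition no_oriented_cycle :: "'v set \<Rightarrow> 'e set \<Rightarrow> ('e \<Rightarrow> 'v) \<Rightarrow> ('e \<Rightarrow> 'v) \<Rightarrow> bool" where
  "no_oriented_cycle V E s t \<longleftrightarrow>
     (\<forall>p. is_path V E s t p \<and> snd p \<noteq> [] \<longrightarrow> pend t p \<noteq> pstart p)"

definition admissible_orientation :: "'v set \<Rightarrow> 'e set \<Rightarrow> ('e \<Rightarrow> 'v) \<Rightarrow> ('e \<Rightarrow> 'v) \<Rightarrow> nat \<Rightarrow> bool" where
  "admissible_orientation V E s t n \<longleftrightarrow> underlying_cycle V E s t n \<and>
     no_oriented_cycle V E s t \<and> (\<exists>x. source_vertex V E s t x)"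

definition path_alg :: "'v set \<Rightarrow> 'e set \<Rightarrow> ('e \<Rightarrow> 'v) \<Rightarrow> ('e \<Rightarrow> 'v) \<Rightarrow> ('v \<times> 'e list \<Rightarrow> 'k::field) set" where
  "path_alg V E s t = {f. finite {p. f p \<noteq> 0} \<and> (\<forall>p. f p \<noteq> 0 \<longrightarrow> is_path V E s t p)}"

definition path_mult :: "'v set \<Rightarrow> 'e set \<Rightarrow> ('e \<Rightarrow> 'v) \<Rightarrow> ('e \<Rightarrow> 'v) \<Rightarrow>
    ('v \<times> 'e list \<Rightarrow> 'k::field) \<Rightarrow> ('v \<times> 'e list \<Rightarrow> 'k) \<Rightarrow> ('v \<times> 'e list \<Rightarrow> 'k)" where
  "path_mult V E s t f g = (\<lambda>r. if is_path V E s t r then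
      (\<Sum>i\<le>length (snd r). f (fst r, take i (snd r)) * g (pend t (fst r, take i (snd r)), drop i (snd r)))
    else 0)"

definition basis_elem :: "'v \<times> 'e list \<Rightarrow> ('v \<times> 'e list \<Rightarrow> 'k::field)" where
  "basis_elem p = (\<lambda>r. if r = p then 1 else 0)"

definition two_sided_ideal :: "'v set \<Rightarrow> 'e set \<Rightarrow> ('e \<Rightarrow> 'v) \<Rightarrow> ('e \<Rightarrow> 'v) \<Rightarrow> ('v \<times> 'e list \<Rightarrow> 'k::field) set \<Rightarrow> bool" where
  "two_sided_ideal V E s t I \<longleftrightarrow> I \<subseteq> path_alg V E s t \<and> (\<lambda>_. 0) \<in> I \<and>
     (\<forall>f\<in>I. \<forall>g\<in>I. (\<lambda>r. f r + g r) \<in> I) \<and>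
     (\<forall>c. \<forall>f\<in>I. (\<lambda>r. c * f r) \<in> I) \<and>
     (\<forall>a\<in>path_alg V E s t. \<forall>f\<in>I. path_mult V E s t a f \<in> I \<and> path_mult V E s t f a \<in> I)"

definition le_J :: "'v set \<Rightarrow> 'e set \<Rightarrow> ('e \<Rightarrow> 'v) \<Rightarrow> ('e \<Rightarrow> 'v) \<Rightarrow> 'v \<times> 'e list \<Rightarrow> 'v \<times> 'e list \<Rightarrow> bool" where
  "le_J V E s t w u \<longleftrightarrow> (\<exists>\<alpha> \<beta>. is_path V E s t \<alpha> \<and> is_path V E s t \<beta> \<and>
      pend t \<alpha> = pstart w \<and> pend t w = pstart \<beta> \<and> u = pcat (pcat \<alpha> w) \<beta>)"

definition maximal_path :: "'v set \<Rightarrow> 'e set \<Rightarrow> ('e \<Rightarrow> 'v) \<Rightarrow> ('e \<Rightarrow> 'v) \<Rightarrow> 'v \<times> 'e list \<Rightarrow> bool" where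
  "maximal_path V E s t w \<longleftrightarrow> is_path V E s t w \<and>
     (\<forall>u. is_path V E s t u \<and> le_J V E s t w u \<longrightarrow> u = w)"

definition linearized_semigroup_ideal :: "'v set \<Rightarrow> 'e set \<Rightarrow> ('e \<Rightarrow> 'v) \<Rightarrow> ('e \<Rightarrow> 'v) \<Rightarrow> ('v \<times> 'e list \<Rightarrow> 'k::field) set \<Rightarrow> bool" where
  "linearized_semigroup_ideal V E s t I \<longleftrightarrow> (\<exists>X. (\<forall>p\<in>X. is_path V E s t p) \<and>
     (\<forall>w\<in>X. \<forall>\<alpha> \<beta>. is_path V E s t \<alpha> \<and> is_path V E s t \<beta> \<and>
         pend t \<alpha> = pstart w \<and> pend t w = pstart \<beta> \<longrightarrow> pcat (pcat \<alpha> w) \<beta> \<in> X) \<and>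
     I = {f \<in> path_alg V E s t. \<forall>r. f r \<noteq> 0 \<longrightarrow> r \<in> X})"

end

theory Submission
  imports Defs
begin

locale cq =
  fixes V :: "'v set" and E :: "'e set" and s t :: "'e \<Rightarrow> 'v"
  assumes sV: "e \<in> E \<Longrightarrow> s e \<in> V"
    and tV: "e \<in> E \<Longrightarrow> t e \<in> V"
    and st: "e \<in> E \<Longrightarrow> s e \<noteq> t e"
    and three: "v \<in> V \<Longrightarrow> e1 \<in> E \<Longrightarrow> e2 \<in> E \<Longrightarrow> e3 \<in> E \<Longrightarrow>
       (s e1 = v \<or> t e1 = v) \<Longrightarrow> (s e2 = v \<or> t e2 = v) \<Longrightarrow> (s e3 = v \<or> t e3 = v) \<Longrightarrow>
       e1 = e2 \<or> e1 = e3 \<or> e2 = e3"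
    and conn: "S \<subseteq> V \<Longrightarrow> S \<noteq> {} \<Longrightarrow> (\<forall>e\<in>E. s e \<in> S \<longleftrightarrow> t e \<in> S) \<Longrightarrow> S = V"
    and acyc: "is_path V E s t (x, es) \<Longrightarrow> es \<noteq> [] \<Longrightarrow> pend t (x, es) \<noteq> x"
begin

abbreviation "P \<equiv> is_path V E s t"

lemma two_inc:
  assumes "v \<in> V" "e1 \<in> E" "e2 \<in> E" "e \<in> E" "e1 \<noteq> e2"
    "s e1 = v \<or> t e1 = v" "s e2 = v \<or> t e2 = v" "s e = v \<or> t e = v"
  shows "e = e1 \<or> e = e2"
  using three[OF assms(1,2,3,4) assms(6,7,8)] assms(5) by auto

lemma pend_app: "pend t (x, es @ fs) = pend t (pend t (x, es), fs)"
  by (auto simp: pend_def)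

lemma path_appD:
  assumes "P (x, es @ fs)"
  shows "P (x, es)" "P (pend t (x, es), fs)"
proof -
  show "P (x, es)" using assms unfolding is_path_def
    by (auto simp: nth_append hd_append split: if_splits)
next
  have E: "set es \<subseteq> E" "x \<in> V" using assms by (auto simp: is_path_def)
  have pv: "pend t (x, es) \<in> V" using E by (auto simp: pend_def intro!: tV subsetD[OF E(1) last_in_set])
  show "P (pend t (x, es), fs)" unfolding is_path_def
  proof (intro conjI allI impI)
    show "fst (pend t (x, es), fs) \<in> V" using pv by simp
    show "set (snd (pend t (x, es), fs)) \<subseteq> E" using assms by (auto simp: is_path_def)
    fix i assume "Suc i < length (snd (pend t (x, es), fs))"
    then show "t (snd (pend t (x, es), fs) ! i) = s (snd (pend t (x, es), fs) ! Suc i)"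
      using assms unfolding is_path_def
      by (auto dest!: spec[of _ "length es + i"] simp: nth_append)
  next
    assume ne: "snd (pend t (x, es), fs) \<noteq> []"
    show "s (hd (snd (pend t (x, es), fs))) = fst (pend t (x, es), fs)"
    proof (cases "es = []")
      case True then show ?thesis using assms ne by (auto simp: is_path_def pend_def)
    next
      case False
      have lk: "\<forall>i. Suc i < length (es@fs) \<longrightarrow> t ((es@fs)!i) = s ((es@fs)! Suc i)"
        using assms by (simp add: is_path_def)
      have "t ((es@fs) ! (length es - 1)) = s ((es@fs) ! Suc (length es - 1))"
        using lk False ne by simp
      then have "t (es ! (length es - 1)) = s ((es@fs) ! Suc (length es - 1))"
        using False by (simp add: nth_append)
      then show ?thesis using False ne
        by (auto simp: pend_def nth_append last_conv_nth hd_conv_nth)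
    qed
  qed
qed

lemma path_appI:
  assumes "P (x, es)" "P (pend t (x, es), fs)"
  shows "P (x, es @ fs)"
  unfolding is_path_def
proof (intro conjI allI impI)
  show "fst (x, es @ fs) \<in> V" "set (snd (x, es @ fs)) \<subseteq> E" using assms by (auto simp: is_path_def)
  assume "snd (x, es @ fs) \<noteq> []"
  then show "s (hd (snd (x, es @ fs))) = fst (x, es @ fs)"
    using assms by (cases "es = []") (auto simp: is_path_def pend_def)
next
  fix i assume i: "Suc i < length (snd (x, es @ fs))"
  show "t (snd (x, es @ fs) ! i) = s (snd (x, es @ fs) ! Suc i)"
  proof (cases "Suc i < length es")
    case True then show ?thesis using assms(1) by (auto simp: is_path_def nth_append)
  next
    case False
    show ?thesis
    proof (cases "i < length es")
      case True
      then have "i = length es - 1" "es \<noteq> []" using False by auto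
      moreover have "fs \<noteq> []" using i True False by auto
      ultimately show ?thesis using assms(2) True False
        by (auto simp: is_path_def nth_append pend_def last_conv_nth hd_conv_nth)
    next
      case False
      then show ?thesis using assms(2) i
        by (auto simp: is_path_def nth_append dest!: spec[of _ "i - length es"])
           (metis Suc_diff_le not_less)
    qed
  qed
qed

lemma path_trivial: "P (x, []) \<longleftrightarrow> x \<in> V" by (auto simp: is_path_def)

end

context cq begin

lemma prefix_eq:
  assumes "P (x, a @ c)" "pend t (x, a @ c) = pend t (x, a)"
  shows "c = []"
proof (rule ccontr)
  assume "c \<noteq> []"
  moreover have "P (pend t (x, a), c)" using path_appD(2)[OF assms(1)] .
  ultimately have "pend t (pend t (x, a), c) \<noteq> pend t (x, a)" using acyc by blast
  then show False using assms(2) pend_app by metis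
qed

lemma suffix_eq:
  assumes "P (x, c @ a)" "P (x, a)" "a \<noteq> []"
  shows "c = []"
proof (rule ccontr)
  assume c: "c \<noteq> []"
  have "P (pend t (x, c), a)" using path_appD(2)[OF assms(1)] .
  then have "s (hd a) = pend t (x, c)" using assms(3) by (auto simp: is_path_def)
  moreover have "s (hd a) = x" using assms(2,3) by (auto simp: is_path_def)
  moreover have "pend t (x, c) \<noteq> x" using acyc path_appD(1)[OF assms(1)] c by blast
  ultimately show False by simp
qed

lemma path_nth: "P (x, a) \<Longrightarrow> i < length a \<Longrightarrow> a ! i \<in> E"
  by (auto simp: is_path_def)

lemma path_link: "P (x, a) \<Longrightarrow> Suc i < length a \<Longrightarrow> t (a ! i) = s (a ! Suc i)"
  by (auto simp: is_path_def)

lemma det: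
  assumes "P (x, a)" "P (x, b)" "a \<noteq> []" "b \<noteq> []" "hd a = hd b"
  shows "i < length a \<Longrightarrow> i < length b \<Longrightarrow> a ! i = b ! i"
proof (induction i)
  case 0 then show ?case using assms by (simp add: hd_conv_nth)
next
  case (Suc i)
  then have IH: "a ! i = b ! i" by simp
  have E: "a ! i \<in> E" "a ! Suc i \<in> E" "b ! Suc i \<in> E" using Suc.prems assms path_nth by auto
  have l1: "t (a ! i) = s (a ! Suc i)" using path_link[OF assms(1)] Suc.prems by simp
  have l2: "t (a ! i) = s (b ! Suc i)" using path_link[OF assms(2)] Suc.prems IH by simp
  have ne: "a ! i \<noteq> a ! Suc i" using l1 st[OF E(1)] by auto
  have "b ! Suc i = a ! i \<or> b ! Suc i = a ! Suc i"
    by (rule two_inc[OF tV[OF E(1)] E(1) E(2) E(3) ne]) (use l1 l2 in auto)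
  moreover have "b ! Suc i \<noteq> a ! i" using l2 st[OF E(1)] by auto
  ultimately show ?case by simp
qed

lemma det_prefix:
  assumes "P (x, a)" "P (x, b)" "a \<noteq> []" "b \<noteq> []" "hd a = hd b" "length a \<le> length b"
  shows "b = a @ drop (length a) b"
proof -
  have "take (length a) b = a"
    by (rule nth_equalityI) (use assms det[OF assms(1-5)] in auto)
  then show ?thesis by (metis append_take_drop_id)
qed

lemma detR:
  assumes "P (x, a)" "P (y, b)" "a \<noteq> []" "b \<noteq> []" "last a = last b"
  shows "i < length a \<Longrightarrow> i < length b \<Longrightarrow> a ! (length a - 1 - i) = b ! (length b - 1 - i)"
proof (induction i)
  case 0 then show ?case using assms by (simp add: last_conv_nth)
next
  case (Suc i)
  then have IH: "a ! (length a - 1 - i) = b ! (length b - 1 - i)" by simp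
  define ia where "ia = length a - 2 - i"
  define ib where "ib = length b - 2 - i"
  have ia: "Suc ia < length a" "length a - 1 - i = Suc ia" "length a - 1 - Suc i = ia"
    using Suc.prems by (auto simp: ia_def)
  have ib: "Suc ib < length b" "length b - 1 - i = Suc ib" "length b - 1 - Suc i = ib"
    using Suc.prems by (auto simp: ib_def)
  have IH': "a ! Suc ia = b ! Suc ib" using IH ia ib by simp
  have E: "a ! Suc ia \<in> E" "a ! ia \<in> E" "b ! ib \<in> E" using ia ib assms path_nth by auto
  have l1: "t (a ! ia) = s (a ! Suc ia)" using path_link[OF assms(1)] ia by simp
  have l2: "t (b ! ib) = s (a ! Suc ia)" using path_link[OF assms(2)] ib IH' by simp
  have ne: "a ! Suc ia \<noteq> a ! ia" using l1 st[OF E(1)] st[OF E(2)] by auto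
  have "b ! ib = a ! Suc ia \<or> b ! ib = a ! ia"
    by (rule two_inc[OF sV[OF E(1)] E(1) E(2) E(3) ne]) (use l1 l2 in auto)
  moreover have "b ! ib \<noteq> a ! Suc ia" using l2 st[OF E(1)] by auto
  ultimately show ?case using ia ib by simp
qed

lemma detR_suffix:
  assumes "P (x, a)" "P (y, b)" "a \<noteq> []" "b \<noteq> []" "last a = last b" "length a \<le> length b"
  shows "b = take (length b - length a) b @ a"
proof -
  have "drop (length b - length a) b = a"
  proof (rule nth_equalityI)
    show "length (drop (length b - length a) b) = length a" using assms by simp
    fix i assume i: "i < length (drop (length b - length a) b)"
    define j where "j = length a - 1 - i"
    have j: "j < length a" "j < length b" "length a - 1 - j = i" using i assms(6) by (auto simp: j_def)
    have "a ! (length a - 1 - j) = b ! (length b - 1 - j)" using detR[OF assms(1-5) j(1,2)] .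
    moreover have "length b - 1 - j = length b - length a + i" using i assms(6) by (auto simp: j_def)
    ultimately show "drop (length b - length a) b ! i = a ! i" using i j assms(6) by simp
  qed
  then show ?thesis by (metis append_take_drop_id)
qed

lemma le_J_sub:
  assumes "P (x, p @ c @ q)"
  shows "le_J V E s t (pend t (x, p), c) (x, p @ c @ q)"
  unfolding le_J_def
proof (intro exI conjI)
  show "P (x, p)" using path_appD(1)[OF assms] .
  have "P (x, (p @ c) @ q)" using assms by simp
  then show "P (pend t (x, p @ c), q)" using path_appD(2) by blast
  show "pend t (x, p) = pstart (pend t (x, p), c)" by (simp add: pstart_def)
  show "pend t (pend t (x, p), c) = pstart (pend t (x, p @ c), q)" by (simp add: pstart_def pend_app)
  show "(x, p @ c @ q) = pcat (pcat (x, p) (pend t (x, p), c)) (pend t (x, p @ c), q)"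
    by (simp add: pcat_def)
qed

lemma le_J_eq:
  assumes "P u" "le_J V E s t w u" "fst w = fst u" "pend t w = pend t u"
  shows "w = u"
proof -
  obtain \<alpha> \<beta> where ab: "P \<alpha>" "P \<beta>" "pend t \<alpha> = fst w" "pend t w = fst \<beta>"
    "u = pcat (pcat \<alpha> w) \<beta>" using assms(2) by (auto simp: le_J_def pstart_def)
  have u: "u = (fst \<alpha>, snd \<alpha> @ snd w @ snd \<beta>)" using ab(5) by (simp add: pcat_def)
  have a0: "snd \<alpha> = []"
  proof (rule ccontr)
    assume "snd \<alpha> \<noteq> []"
    then have "pend t (fst \<alpha>, snd \<alpha>) \<noteq> fst \<alpha>" using acyc[of "fst \<alpha>" "snd \<alpha>"] ab(1) by simp
    then show False using ab(3) assms(3) u by simp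
  qed
  have "pend t u = pend t (pend t (fst \<alpha>, snd w), snd \<beta>)" using u a0 pend_app by simp
  also have "pend t (fst \<alpha>, snd w) = pend t w" using ab(3) a0 assms(3) u
    by (simp add: pend_def)
  finally have pu: "pend t u = pend t (fst \<beta>, snd \<beta>)" using ab(4) by simp
  have b0: "snd \<beta> = []"
  proof (rule ccontr)
    assume "snd \<beta> \<noteq> []"
    then have "pend t (fst \<beta>, snd \<beta>) \<noteq> fst \<beta>" using acyc[of "fst \<beta>" "snd \<beta>"] ab(2) by simp
    then show False using pu ab(4) assms(4) by simp
  qed
  show ?thesis using u a0 b0 assms(3) by (cases w) simp
qed

lemma maximal_of:
  assumes "P w" "\<forall>e\<in>E. t e \<noteq> fst w" "\<forall>e\<in>E. s e \<noteq> pend t w"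
  shows "maximal_path V E s t w"
  unfolding maximal_path_def
proof (intro conjI allI impI)
  show "P w" by fact
  fix u assume "P u \<and> le_J V E s t w u"
  then obtain \<alpha> \<beta> where ab: "P \<alpha>" "P \<beta>" "pend t \<alpha> = fst w" "pend t w = fst \<beta>"
    "u = pcat (pcat \<alpha> w) \<beta>" by (auto simp: le_J_def pstart_def)
  have a0: "snd \<alpha> = []"
  proof (rule ccontr)
    assume ne: "snd \<alpha> \<noteq> []"
    then have "last (snd \<alpha>) \<in> E" using ab(1) by (auto simp: is_path_def)
    moreover have "t (last (snd \<alpha>)) = fst w" using ab(3) ne by (simp add: pend_def)
    ultimately show False using assms(2) by blast
  qed
  have b0: "snd \<beta> = []"
  proof (rule ccontr)
    assume ne: "snd \<beta> \<noteq> []"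
    then have "hd (snd \<beta>) \<in> E" "s (hd (snd \<beta>)) = fst \<beta>" using ab(2) by (auto simp: is_path_def)
    then show False using assms(3) ab(4) by metis
  qed
  have "fst \<alpha> = fst w" using ab(3) a0 by (simp add: pend_def)
  then show "u = w" using ab(5) a0 b0 by (cases w) (simp add: pcat_def)
qed

end

context cq begin

lemma pend_take_s: "P (x, a) \<Longrightarrow> j < length a \<Longrightarrow> pend t (x, take j a) = s (a ! j)"
proof (cases j)
  case 0
  assume "P (x, a)" "j < length a"
  then show ?thesis using 0 by (auto simp: pend_def is_path_def hd_conv_nth)
next
  case (Suc i)
  assume pa: "P (x, a)" "j < length a"
  then have "t (a ! i) = s (a ! Suc i)" using path_link Suc by blast
  then show ?thesis using Suc pa by (auto simp: pend_def last_conv_nth)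
qed

lemma pend_take_t: "j < length a \<Longrightarrow> pend t (x, take (Suc j) a) = t (a ! j)"
  by (auto simp: pend_def last_conv_nth)

lemma vertex_le:
  assumes "P (x, a)" "j < length a" "z = s (a ! j) \<or> z = t (a ! j)"
  shows "le_J V E s t (z, []) (x, a)"
proof (cases "z = s (a ! j)")
  case True
  have "le_J V E s t (pend t (x, take j a), []) (x, take j a @ [] @ drop j a)"
    by (rule le_J_sub) (use assms(1) in simp)
  then show ?thesis using pend_take_s[OF assms(1,2)] True by simp
next
  case False
  then have z: "z = t (a ! j)" using assms(3) by simp
  have "le_J V E s t (pend t (x, take (Suc j) a), []) (x, take (Suc j) a @ [] @ drop (Suc j) a)"
    by (rule le_J_sub) (use assms(1) in simp)
  then show ?thesis using pend_take_t[OF assms(2), of x] z by simp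
qed

lemma in_path_le:
  assumes pa: "P (x, a)" and sink: "\<forall>e\<in>E. s e \<noteq> pend t (x, a)"
    and pc: "P (z, c)" and cn: "c \<noteq> []" and hc: "hd c \<in> set a"
  shows "le_J V E s t (z, c) (x, a)"
proof -
  obtain j where j: "j < length a" "hd c = a ! j" using hc by (auto simp: in_set_conv_nth)
  define d where "d = drop j a"
  have pd0: "P (pend t (x, take j a), d)" using path_appD(2)[of x "take j a" d] pa by (simp add: d_def)
  have z: "z = s (a ! j)" using pc cn j by (auto simp: is_path_def)
  have pz: "pend t (x, take j a) = z" using pend_take_s[OF pa j(1)] z by simp
  have pd: "P (z, d)" using pd0 pz by simp
  have dn: "d \<noteq> []" using j by (simp add: d_def)
  have hd: "hd d = hd c" using j by (simp add: d_def hd_drop_conv_nth)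
  show ?thesis
  proof (cases "length c \<le> length d")
    case True
    have "d = c @ drop (length c) d" using det_prefix[OF pc pd cn dn hd[symmetric] True] .
    then have a: "a = take j a @ c @ drop (length c) d" by (metis append_take_drop_id d_def)
    have "le_J V E s t (pend t (x, take j a), c) (x, take j a @ c @ drop (length c) d)"
      by (rule le_J_sub) (use pa a in simp)
    then show ?thesis using a pz by simp
  next
    case False
    then have c: "c = d @ drop (length d) c" using det_prefix[OF pd pc dn cn hd] by simp
    define c2 where "c2 = drop (length d) c"
    have c2n: "c2 \<noteq> []" using False by (simp add: c2_def)
    have "P (z, d @ c2)" using pc c c2_def by simp
    then have "P (pend t (z, d), c2)" by (rule path_appD(2))
    then have "hd c2 \<in> E" "s (hd c2) = pend t (z, d)" using c2n by (auto simp: is_path_def)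
    moreover have "pend t (z, d) = pend t (x, a)"
      using pend_app[of x "take j a" d] pz by (simp add: d_def)
    ultimately show ?thesis using sink by metis
  qed
qed

lemma interior:
  assumes "P (x, a)" "j < length a" "v = s (a ! j) \<or> v = t (a ! j)"
  shows "v = x \<or> v = pend t (x, a) \<or> (\<exists>i. Suc i < length a \<and> v = t (a ! i) \<and> v = s (a ! Suc i))"
proof (cases "v = s (a ! j)")
  case True
  show ?thesis
  proof (cases j)
    case 0 then show ?thesis using True assms by (auto simp: is_path_def hd_conv_nth)
  next
    case (Suc i)
    then show ?thesis using True assms path_link[OF assms(1), of i] by auto
  qed
next
  case False
  then have v: "v = t (a ! j)" using assms by simp
  show ?thesis
  proof (cases "Suc j < length a")
    case True then show ?thesis using v path_link[OF assms(1) True] by auto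
  next
    case False
    then have "j = length a - 1" using assms by simp
    then show ?thesis using v assms by (auto simp: pend_def last_conv_nth)
  qed
qed

end

context cq begin

lemma two_paths:
  assumes pa: "P (x, a)" and pb: "P (x, b)" and ab: "a \<noteq> b"
    and pe: "pend t (x, a) = pend t (x, b)"
  shows "num_sources V E s t = 1"
    and "\<forall>q. P q \<longrightarrow> le_J V E s t q (x, a) \<or> le_J V E s t q (x, b)"
    and "{p. maximal_path V E s t p} = {(x, a), (x, b)}"
proof -
  define y where "y = pend t (x, a)"
  have xV: "x \<in> V" using pa by (simp add: is_path_def)
  have an: "a \<noteq> []"
  proof
    assume a0: "a = []"
    then have "b \<noteq> []" using ab by simp
    then have "pend t (x, b) \<noteq> x" using acyc pb by blast
    then show False using pe a0 by (simp add: pend_def)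
  qed
  have bn: "b \<noteq> []"
  proof
    assume b0: "b = []"
    then have "pend t (x, a) \<noteq> x" using acyc pa an by blast
    then show False using pe b0 by (simp add: pend_def)
  qed
  have hab: "hd a \<noteq> hd b"
  proof
    assume h: "hd a = hd b"
    show False
    proof (cases "length a \<le> length b")
      case True
      then have b: "b = a @ drop (length a) b" using det_prefix[OF pa pb an bn h] by simp
      have "drop (length a) b = []"
        by (rule prefix_eq[of x a]) (use pb pe b in auto)
      then show False using b ab by simp
    next
      case False
      then have b: "a = b @ drop (length b) a" using det_prefix[OF pb pa bn an h[symmetric]] by simp
      have "drop (length b) a = []"
        by (rule prefix_eq[of x b]) (use pa pe b in auto)
      then show False using b ab by simp
    qed
  qed
  have lab: "last a \<noteq> last b"
  proof
    assume h: "last a = last b"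
    show False
    proof (cases "length a \<le> length b")
      case True
      then obtain c where b: "b = c @ a" using detR_suffix[OF pa pb an bn h] by blast
      have "c = []"
        by (rule suffix_eq[of x _ a]) (use pb pa an b in auto)
      then show False using b ab by simp
    next
      case False
      then obtain c where b: "a = c @ b" using detR_suffix[OF pb pa bn an h[symmetric]] by (metis less_or_eq_imp_le nat_le_linear)
      have "c = []"
        by (rule suffix_eq[of x _ b]) (use pb pa bn b in auto)
      then show False using b ab by simp
    qed
  qed
  have Ein: "hd a \<in> E" "hd b \<in> E" "last a \<in> E" "last b \<in> E"
    using pa pb an bn by (auto simp: is_path_def)
  have sh: "s (hd a) = x" "s (hd b) = x" using pa pb an bn by (auto simp: is_path_def)
  have tl: "t (last a) = y" "t (last b) = y" using pe an bn by (auto simp: y_def pend_def)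
  have yV: "y \<in> V" using tl Ein tV by metis
  have incx: "e \<in> E \<Longrightarrow> s e = x \<or> t e = x \<Longrightarrow> e = hd a \<or> e = hd b" for e
    by (rule two_inc[OF xV Ein(1,2) _ hab]) (use sh in auto)
  have incy: "e \<in> E \<Longrightarrow> s e = y \<or> t e = y \<Longrightarrow> e = last a \<or> e = last b" for e
    by (rule two_inc[OF yV Ein(3,4) _ lab]) (use tl in auto)
  have src: "\<forall>e\<in>E. t e \<noteq> x"
    using incx sh st by metis
  have sink: "\<forall>e\<in>E. s e \<noteq> y"
    using incy tl st by metis
  have inc_int: "e \<in> E \<Longrightarrow> s e = v \<or> t e = v \<Longrightarrow> P (x, c) \<Longrightarrow> Suc i < length c \<Longrightarrow>
      v = t (c ! i) \<Longrightarrow> v = s (c ! Suc i) \<Longrightarrow> e \<in> set c" for e v c i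
  proof -
    assume h: "e \<in> E" "s e = v \<or> t e = v" "P (x, c)" "Suc i < length c" "v = t (c ! i)" "v = s (c ! Suc i)"
    have E2: "c ! i \<in> E" "c ! Suc i \<in> E" using h path_nth by auto
    have ne: "c ! i \<noteq> c ! Suc i" using h(5,6) st[OF E2(1)] by auto
    have "e = c ! i \<or> e = c ! Suc i"
      by (rule two_inc[OF tV[OF E2(1)] E2 h(1) ne]) (use h in auto)
    then show "e \<in> set c" using h(4) by auto
  qed
  have CL: "e \<in> E \<Longrightarrow> e' \<in> set a \<union> set b \<Longrightarrow> (s e = s e' \<or> s e = t e' \<or> t e = s e' \<or> t e = t e')
     \<Longrightarrow> e \<in> set a \<union> set b" for e e'
  proof -
    assume h: "e \<in> E" "e' \<in> set a \<union> set b" "s e = s e' \<or> s e = t e' \<or> t e = s e' \<or> t e = t e'"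
    obtain v where v: "v = s e' \<or> v = t e'" "s e = v \<or> t e = v" using h(3) by blast
    have key: "P (x, c) \<Longrightarrow> pend t (x, c) = y \<Longrightarrow> e' \<in> set c \<Longrightarrow> set c \<subseteq> set a \<union> set b \<Longrightarrow> ?thesis" for c
    proof -
      assume hc: "P (x, c)" "pend t (x, c) = y" "e' \<in> set c" "set c \<subseteq> set a \<union> set b"
      obtain j where j: "j < length c" "e' = c ! j" using hc(3) by (auto simp: in_set_conv_nth)
      have "v = x \<or> v = y \<or> (\<exists>i. Suc i < length c \<and> v = t (c ! i) \<and> v = s (c ! Suc i))"
        using interior[OF hc(1) j(1), of v] v j hc(2) by auto
      then show ?thesis
      proof (elim disjE exE conjE)
        assume "v = x" then show ?thesis using incx[OF h(1)] v an bn by auto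
      next
        assume "v = y" then show ?thesis using incy[OF h(1)] v an bn by auto
      next
        fix i assume "Suc i < length c" "v = t (c ! i)" "v = s (c ! Suc i)"
        then have "e \<in> set c" using inc_int[OF h(1) v(2) hc(1)] by blast
        then show ?thesis using hc(4) by blast
      qed
    qed
    show ?thesis
    proof (cases "e' \<in> set a")
      case True then show ?thesis using key[OF pa _ True] y_def by auto
    next
      case False then have "e' \<in> set b" using h by auto
      then show ?thesis using key[OF pb _ ] y_def pe by auto
    qed
  qed
  define S where "S = {v \<in> V. \<exists>e\<in>set a \<union> set b. v = s e \<or> v = t e}"
  have SV: "S = V"
  proof (rule conn)
    show "S \<subseteq> V" by (auto simp: S_def)
    show "S \<noteq> {}" using xV sh an by (auto simp: S_def intro!: bexI[of _ "hd a"])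
    show "\<forall>e\<in>E. (s e \<in> S) = (t e \<in> S)"
    proof
      fix e assume e: "e \<in> E"
      show "(s e \<in> S) = (t e \<in> S)"
      proof
        assume "s e \<in> S"
        then obtain e' where "e' \<in> set a \<union> set b" "s e = s e' \<or> s e = t e'" by (auto simp: S_def)
        then have "e \<in> set a \<union> set b" using CL[OF e] by blast
        then show "t e \<in> S" using tV[OF e] by (auto simp: S_def)
      next
        assume "t e \<in> S"
        then obtain e' where "e' \<in> set a \<union> set b" "t e = s e' \<or> t e = t e'" by (auto simp: S_def)
        then have "e \<in> set a \<union> set b" using CL[OF e] by blast
        then show "s e \<in> S" using sV[OF e] by (auto simp: S_def)
      qed
    qed
  qed
  have EA: "E \<subseteq> set a \<union> set b"
  proof
    fix e assume e: "e \<in> E"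
    then have "s e \<in> S" using SV sV by auto
    then obtain e' where "e' \<in> set a \<union> set b" "s e = s e' \<or> s e = t e'" by (auto simp: S_def)
    then show "e \<in> set a \<union> set b" using CL[OF e] by blast
  qed
  have vtx: "z \<in> V \<Longrightarrow> \<exists>c. (c = a \<or> c = b) \<and> (\<exists>j<length c. z = s (c ! j) \<or> z = t (c ! j))" for z
  proof -
    assume "z \<in> V"
    then have "z \<in> S" using SV by simp
    then obtain e' where e': "e' \<in> set a \<union> set b" "z = s e' \<or> z = t e'" by (auto simp: S_def)
    then show ?thesis by (auto simp: in_set_conv_nth)
  qed
  have srcs: "{z. source_vertex V E s t z} = {x}"
  proof (intro set_eqI iffI)
    fix z assume "z \<in> {z. source_vertex V E s t z}"
    then have z: "z \<in> V" "\<forall>e\<in>E. t e \<noteq> z" by (auto simp: source_vertex_def)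
    obtain c j where cj: "c = a \<or> c = b" "j < length c" "z = s (c ! j) \<or> z = t (c ! j)"
      using vtx[OF z(1)] by blast
    have pc: "P (x, c)" "pend t (x, c) = y" "c \<noteq> []" using cj(1) pa pb pe an bn y_def by auto
    have "z = x \<or> z = y \<or> (\<exists>i. Suc i < length c \<and> z = t (c ! i) \<and> z = s (c ! Suc i))"
      using interior[OF pc(1) cj(2,3)] pc(2) by simp
    moreover have "z \<noteq> y" using z tl Ein by metis
    moreover have "\<not> (\<exists>i. Suc i < length c \<and> z = t (c ! i) \<and> z = s (c ! Suc i))"
      using z path_nth[OF pc(1)] by (metis Suc_lessD)
    ultimately show "z \<in> {x}" by simp
  next
    fix z assume "z \<in> {x}"
    then show "z \<in> {z. source_vertex V E s t z}" using xV src by (simp add: source_vertex_def)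
  qed
  show "num_sources V E s t = 1" by (simp add: num_sources_def srcs)
  have sa: "\<forall>e\<in>E. s e \<noteq> pend t (x, a)" using sink y_def by simp
  have sb: "\<forall>e\<in>E. s e \<noteq> pend t (x, b)" using sink y_def pe by simp
  show below: "\<forall>q. P q \<longrightarrow> le_J V E s t q (x, a) \<or> le_J V E s t q (x, b)"
  proof (intro allI impI)
    fix q assume pq: "P q"
    obtain z c where q: "q = (z, c)" by (cases q)
    show "le_J V E s t q (x, a) \<or> le_J V E s t q (x, b)"
    proof (cases "c = []")
      case True
      have "z \<in> V" using pq q by (simp add: is_path_def)
      then obtain c' j where cj: "c' = a \<or> c' = b" "j < length c'" "z = s (c' ! j) \<or> z = t (c' ! j)"
        using vtx by blast
      then show ?thesis using vertex_le[OF pa] vertex_le[OF pb] q True by blast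
    next
      case False
      have "hd c \<in> E" using pq q False by (auto simp: is_path_def)
      then have "hd c \<in> set a \<or> hd c \<in> set b" using EA by auto
      then show ?thesis using in_path_le[OF pa sa] in_path_le[OF pb sb] pq q False by auto
    qed
  qed
  show "{p. maximal_path V E s t p} = {(x, a), (x, b)}"
  proof (intro set_eqI iffI)
    fix p assume "p \<in> {p. maximal_path V E s t p}"
    then have m: "P p" "\<forall>u. P u \<and> le_J V E s t p u \<longrightarrow> u = p" by (auto simp: maximal_path_def)
    then show "p \<in> {(x, a), (x, b)}" using below pa pb by blast
  next
    fix p assume "p \<in> {(x, a), (x, b)}"
    then show "p \<in> {p. maximal_path V E s t p}"
      using maximal_of[OF pa] maximal_of[OF pb] src sa sb by auto
  qed
qed

end

context cq begin

abbreviation "B \<equiv> basis_elem"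
abbreviation "M \<equiv> path_mult V E s t"

lemma pcat_path: "P \<alpha> \<Longrightarrow> P w \<Longrightarrow> pend t \<alpha> = fst w \<Longrightarrow> P (pcat \<alpha> w)"
  using path_appI[of "fst \<alpha>" "snd \<alpha>" "snd w"] by (cases \<alpha>, cases w) (auto simp: pcat_def)

lemma BM:
  assumes "P \<alpha>" "P w" "pend t \<alpha> = fst w"
  shows "M (B \<alpha>) (B w) = B (pcat \<alpha> w)"
proof
  fix r
  show "M (B \<alpha>) (B w) r = B (pcat \<alpha> w) r"
  proof (cases "P r")
    case False
    then have "r \<noteq> pcat \<alpha> w" using pcat_path[OF assms] by auto
    then show ?thesis using False by (simp add: path_mult_def basis_elem_def)
  next
    case True
    have eq: "B \<alpha> (fst r, take i (snd r)) * B w (pend t (fst r, take i (snd r)), drop i (snd r))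
       = (if i = length (snd \<alpha>) \<and> r = pcat \<alpha> w then 1 else 0)" if i: "i \<in> {..length (snd r)}" for i
    proof (cases "i = length (snd \<alpha>) \<and> r = pcat \<alpha> w")
      case True
      then show ?thesis using assms(3) by (cases \<alpha>, cases w) (auto simp: basis_elem_def pcat_def)
    next
      case False
      have "\<not> ((fst r, take i (snd r)) = \<alpha> \<and> (pend t (fst r, take i (snd r)), drop i (snd r)) = w)"
      proof
        assume h: "(fst r, take i (snd r)) = \<alpha> \<and> (pend t (fst r, take i (snd r)), drop i (snd r)) = w"
        then have "r = pcat \<alpha> w"
          by (cases r) (metis append_take_drop_id fst_conv pcat_def snd_conv)
        moreover have "i = length (snd \<alpha>)" using h i by auto
        ultimately show False using False by simp
      qed
      then show ?thesis using False by (auto simp: basis_elem_def)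
    qed
    have "M (B \<alpha>) (B w) r = (\<Sum>i\<le>length (snd r). B \<alpha> (fst r, take i (snd r)) * B w (pend t (fst r, take i (snd r)), drop i (snd r)))"
      using True by (simp add: path_mult_def)
    also have "\<dots> = (\<Sum>i\<le>length (snd r). (if i = length (snd \<alpha>) \<and> r = pcat \<alpha> w then 1 else 0))"
      by (rule sum.cong[OF refl eq])
    also have "\<dots> = B (pcat \<alpha> w) r"
      by (cases "r = pcat \<alpha> w") (auto simp: basis_elem_def pcat_def)
    finally show ?thesis .
  qed
qed

lemma EL:
  assumes "f \<in> path_alg V E s t"
  shows "M (B (x, [])) f = (\<lambda>r. if fst r = x then f r else 0)"
proof
  fix r
  show "M (B (x, [])) f r = (if fst r = x then f r else 0)"
  proof (cases "P r")
    case False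
    then have "f r = 0" using assms by (cases r) (auto simp: path_alg_def)
    then show ?thesis using False by (simp add: path_mult_def)
  next
    case True
    have eq: "B (x, []) (fst r, take i (snd r)) * f (pend t (fst r, take i (snd r)), drop i (snd r))
       = (if i = 0 then (if fst r = x then f r else 0) else 0)" if i: "i \<in> {..length (snd r)}" for i
      using i by (cases r) (auto simp: basis_elem_def pend_def)
    have "M (B (x, [])) f r = (\<Sum>i\<le>length (snd r). B (x, []) (fst r, take i (snd r)) * f (pend t (fst r, take i (snd r)), drop i (snd r)))"
      using True by (simp add: path_mult_def)
    also have "\<dots> = (\<Sum>i\<le>length (snd r). (if i = 0 then (if fst r = x then f r else 0) else 0))"
      by (rule sum.cong[OF refl eq])
    also have "\<dots> = (if fst r = x then f r else 0)" by simp
    finally show ?thesis .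
  qed
qed

lemma ER:
  assumes "f \<in> path_alg V E s t"
  shows "M f (B (y, [])) = (\<lambda>r. if pend t r = y then f r else 0)"
proof
  fix r
  show "M f (B (y, [])) r = (if pend t r = y then f r else 0)"
  proof (cases "P r")
    case False
    then have "f r = 0" using assms by (cases r) (auto simp: path_alg_def)
    then show ?thesis using False by (simp add: path_mult_def)
  next
    case True
    have eq: "f (fst r, take i (snd r)) * B (y, []) (pend t (fst r, take i (snd r)), drop i (snd r))
       = (if i = length (snd r) then (if pend t r = y then f r else 0) else 0)" if i: "i \<in> {..length (snd r)}" for i
      using i by (cases r) (auto simp: basis_elem_def pend_def)
    have "M f (B (y, [])) r = (\<Sum>i\<le>length (snd r). f (fst r, take i (snd r)) * B (y, []) (pend t (fst r, take i (snd r)), drop i (snd r)))"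
      using True by (simp add: path_mult_def)
    also have "\<dots> = (\<Sum>i\<le>length (snd r). (if i = length (snd r) then (if pend t r = y then f r else 0) else 0))"
      by (rule sum.cong[OF refl eq])
    also have "\<dots> = (if pend t r = y then f r else 0)" by simp
    finally show ?thesis .
  qed
qed

lemma basis_in: "P p \<Longrightarrow> (B p :: _ \<Rightarrow> 'k::field) \<in> path_alg V E s t"
proof -
  assume "P p"
  moreover have "{r. (B p r :: 'k) \<noteq> 0} = {p}" by (auto simp: basis_elem_def)
  ultimately show ?thesis
    by (auto simp: path_alg_def basis_elem_def)
qed

end

locale cqi = cq V E s t for V :: "'v set" and E :: "'e set" and s t +
  fixes I :: "('v \<times> 'e list \<Rightarrow> 'k::field) set"
  assumes idl: "two_sided_ideal V E s t I"
begin

lemma I_alg: "f \<in> I \<Longrightarrow> f \<in> path_alg V E s t" using idl by (auto simp: two_sided_ideal_def)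
lemma I_zero: "(\<lambda>_. 0) \<in> I" using idl by (auto simp: two_sided_ideal_def)
lemma I_add: "f \<in> I \<Longrightarrow> g \<in> I \<Longrightarrow> (\<lambda>r. f r + g r) \<in> I" using idl by (auto simp: two_sided_ideal_def)
lemma I_smult: "f \<in> I \<Longrightarrow> (\<lambda>r. c * f r) \<in> I" using idl by (auto simp: two_sided_ideal_def)
lemma I_ml: "a \<in> path_alg V E s t \<Longrightarrow> f \<in> I \<Longrightarrow> M a f \<in> I" using idl by (auto simp: two_sided_ideal_def)
lemma I_mr: "a \<in> path_alg V E s t \<Longrightarrow> f \<in> I \<Longrightarrow> M f a \<in> I" using idl by (auto simp: two_sided_ideal_def)

lemma I_lin: "f \<in> I \<Longrightarrow> g \<in> I \<Longrightarrow> (\<lambda>r. c * f r + d * g r) \<in> I"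
  using I_add I_smult by blast

lemma I_eq: "f \<in> I \<Longrightarrow> (\<And>r. g r = f r) \<Longrightarrow> g \<in> I"
proof -
  assume "f \<in> I" "\<And>r. g r = f r"
  then have "g = f" by auto
  then show ?thesis using \<open>f \<in> I\<close> by simp
qed

lemma I_sum: "finite F \<Longrightarrow> (\<forall>p\<in>F. B p \<in> I) \<Longrightarrow> (\<lambda>r. \<Sum>p\<in>F. c p * B p r) \<in> I"
proof (induction F rule: finite_induct)
  case empty then show ?case using I_zero by simp
next
  case (insert p F)
  then have "(\<lambda>r. c p * B p r + (\<Sum>q\<in>F. c q * B q r)) \<in> I"
    using I_add I_smult by auto
  then show ?case using insert by simp
qed

lemma I_ext:
  assumes "B w \<in> I" "P \<alpha>" "P \<beta>" "P w" "pend t \<alpha> = fst w" "pend t w = fst \<beta>"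
  shows "B (pcat (pcat \<alpha> w) \<beta>) \<in> I"
proof -
  have "M (B \<alpha>) (B w) \<in> I" using I_ml basis_in assms by blast
  then have "B (pcat \<alpha> w) \<in> I" using BM[OF assms(2,4,5)] by metis
  then have "M (B (pcat \<alpha> w)) (B \<beta>) \<in> I" using I_mr basis_in assms by blast
  moreover have "pend t (pcat \<alpha> w) = fst \<beta>"
    using assms(5,6) by (cases \<alpha>, cases w) (simp add: pcat_def pend_app)
  ultimately show ?thesis using BM[OF pcat_path[OF assms(2,4,5)] assms(3)] by metis
qed

lemma I_le: "B w \<in> I \<Longrightarrow> P w \<Longrightarrow> le_J V E s t w u \<Longrightarrow> B u \<in> I"
proof -
  assume h: "B w \<in> I" "P w" "le_J V E s t w u"
  then obtain \<alpha> \<beta> where ab: "P \<alpha>" "P \<beta>" "pend t \<alpha> = fst w" "pend t w = fst \<beta>"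
    "u = pcat (pcat \<alpha> w) \<beta>" by (auto simp: le_J_def pstart_def)
  show ?thesis using I_ext[OF h(1) ab(1,2) h(2) ab(3,4)] ab(5) by simp
qed

lemma corner:
  assumes "f \<in> I" "x \<in> V" "y \<in> V"
  shows "(\<lambda>r. if fst r = x \<and> pend t r = y then f r else 0) \<in> I"
proof -
  have bx: "B (x, []) \<in> path_alg V E s t" by (rule basis_in) (simp add: path_trivial assms(2))
  have by': "B (y, []) \<in> path_alg V E s t" by (rule basis_in) (simp add: path_trivial assms(3))
  have m1: "M (B (x, [])) f \<in> I" by (rule I_ml[OF bx assms(1)])
  have e1: "M (B (x, [])) f = (\<lambda>r. if fst r = x then f r else 0)" by (rule EL[OF I_alg[OF assms(1)]])
  have g: "(\<lambda>r. if fst r = x then f r else 0) \<in> I" using m1 e1 by metis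
  have m2: "M (\<lambda>r. if fst r = x then f r else 0) (B (y, [])) \<in> I" by (rule I_mr[OF by' g])
  have e2: "M (\<lambda>r. if fst r = x then f r else 0) (B (y, [])) = (\<lambda>r. if pend t r = y then (if fst r = x then f r else 0) else 0)"
    by (rule ER[OF I_alg[OF g]])
  have m3: "(\<lambda>r. if pend t r = y then (if fst r = x then f r else 0) else 0) \<in> I" using m2 e2 by metis
  show ?thesis by (rule I_eq[OF m3]) auto
qed

lemma unique:
  assumes "f \<in> I" "f r \<noteq> 0" and u: "\<forall>q. P q \<and> fst q = fst r \<and> pend t q = pend t r \<longrightarrow> q = r"
  shows "B r \<in> I"
proof -
  have pr: "P r" using assms(2) I_alg[OF assms(1)] unfolding path_alg_def by blast
  have xy: "fst r \<in> V" "pend t r \<in> V" using pr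
    by (cases r, auto simp: is_path_def pend_def intro!: tV)
  have g: "(\<lambda>q. if fst q = fst r \<and> pend t q = pend t r then f q else 0) \<in> I"
    using corner[OF assms(1) xy] .
  show ?thesis
  proof (rule I_eq[OF I_smult[OF g, of "1 / f r"]])
    fix q
    show "B r q = 1 / f r * (if fst q = fst r \<and> pend t q = pend t r then f q else 0)"
    proof (cases "q = r")
      case True then show ?thesis using assms(2) by (simp add: basis_elem_def)
    next
      case False
      have "P q" if "f q \<noteq> 0" using that I_alg[OF assms(1)] unfolding path_alg_def by blast
      then have "f q = 0 \<or> \<not> (fst q = fst r \<and> pend t q = pend t r)"
        using u False by blast
      then show ?thesis using False by (auto simp: basis_elem_def)
    qed
  qed
qed

end

context cqi begin

lemma key:
  assumes notb: "\<not> (num_sources V E s t = 1 \<and> (\<exists>w u a. w \<noteq> u \<and> {p. maximal_path V E s t p} = {w, u} \<and> a \<noteq> 0 \<and>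
          I = {(\<lambda>r. c * (basis_elem w r + a * basis_elem u r)) | c. True}))"
    and f: "f \<in> I" "f r \<noteq> 0"
  shows "B r \<in> I"
proof (rule ccontr)
  assume nr: "B r \<notin> I"
  have pr: "P r" using f(2) I_alg[OF f(1)] unfolding path_alg_def by blast
  define x where "x = fst r"
  define y where "y = pend t r"
  have xy: "x \<in> V" "y \<in> V" using pr
    by (cases r, auto simp: x_def y_def is_path_def pend_def intro!: tV)
  have "\<not> (\<forall>q. P q \<and> fst q = fst r \<and> pend t q = pend t r \<longrightarrow> q = r)" using unique[OF f] nr by blast
  then obtain r' where r': "P r'" "fst r' = x" "pend t r' = y" "r' \<noteq> r" by (auto simp: x_def y_def)
  obtain a where ra: "r = (x, a)" by (cases r) (simp add: x_def)
  obtain b where rb: "r' = (x, b)" using r'(2) by (cases r') simp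
  have ab: "a \<noteq> b" using ra rb r'(4) by simp
  have pa: "P (x, a)" using pr ra by simp
  have pb: "P (x, b)" using r'(1) rb by simp
  have pe: "pend t (x, a) = pend t (x, b)" using ra rb r'(3) y_def by simp
  note tp = two_paths[OF pa pb ab pe]
  have onlytwo: "P q \<Longrightarrow> fst q = x \<Longrightarrow> pend t q = y \<Longrightarrow> q = r \<or> q = r'" for q
  proof -
    assume q: "P q" "fst q = x" "pend t q = y"
    then have "le_J V E s t q (x, a) \<or> le_J V E s t q (x, b)" using tp(2) by blast
    then show ?thesis
    proof
      assume "le_J V E s t q (x, a)"
      then show ?thesis using le_J_eq[OF pa] q ra y_def by auto
    next
      assume "le_J V E s t q (x, b)"
      then show ?thesis using le_J_eq[OF pb] q rb r'(3) by auto
    qed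
  qed
  define g where "g = (\<lambda>q. if fst q = x \<and> pend t q = y then f q else 0)"
  have gI: "g \<in> I" unfolding g_def by (rule corner[OF f(1) xy])
  have gq: "g q = f r * B r q + f r' * B r' q" for q
  proof (cases "q = r")
    case True then show ?thesis using r'(4) by (simp add: g_def basis_elem_def x_def y_def)
  next
    case False
    show ?thesis
    proof (cases "q = r'")
      case True then show ?thesis using r' False by (simp add: g_def basis_elem_def)
    next
      case False2: False
      have "P q" if "f q \<noteq> 0" using that I_alg[OF f(1)] unfolding path_alg_def by blast
      have "g q = 0"
      proof (cases "fst q = x \<and> pend t q = y")
        case True
        show ?thesis
        proof (rule ccontr)
          assume "g q \<noteq> 0"
          then have "f q \<noteq> 0" using True by (simp add: g_def)
          then have "P q" by fact
          then show False using onlytwo[of q] True False False2 by blast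
        qed
      qed (auto simp: g_def)
      then show ?thesis using False False2 by (simp add: basis_elem_def)
    qed
  qed
  have fr': "f r' \<noteq> 0"
  proof
    assume "f r' = 0"
    then have "B r \<in> I" using f(2) by (intro I_eq[OF I_smult[OF gI, of "1 / f r"]]) (simp add: gq)
    then show False using nr by simp
  qed
  have nr': "B r' \<notin> I"
  proof
    assume "B r' \<in> I"
    then have "B r \<in> I" using f(2)
      by (intro I_eq[OF I_lin[OF gI \<open>B r' \<in> I\<close>, of "1 / f r" "- (f r' / f r)"]])
         (simp add: gq field_simps)
    then show False using nr by simp
  qed
  have others: "P p \<Longrightarrow> p \<noteq> r \<Longrightarrow> p \<noteq> r' \<Longrightarrow> B p \<notin> I" for p
  proof
    assume p: "P p" "p \<noteq> r" "p \<noteq> r'" "B p \<in> I"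
    then have "le_J V E s t p (x, a) \<or> le_J V E s t p (x, b)" using tp(2) by blast
    then show False using I_le[OF p(4,1)] nr nr' ra rb by auto
  qed
  have hz: "h \<in> I \<Longrightarrow> q \<noteq> r \<Longrightarrow> q \<noteq> r' \<Longrightarrow> h q = 0" for h q
  proof (rule ccontr)
    assume h: "h \<in> I" "q \<noteq> r" "q \<noteq> r'" "h q \<noteq> 0"
    have pq: "P q" using h(4) I_alg[OF h(1)] unfolding path_alg_def by blast
    have "\<forall>q'. P q' \<and> fst q' = fst q \<and> pend t q' = pend t q \<longrightarrow> q' = q"
    proof (intro allI impI)
      fix q' assume q': "P q' \<and> fst q' = fst q \<and> pend t q' = pend t q"
      show "q' = q"
      proof (rule ccontr)
        assume ne: "q' \<noteq> q"
        have p1: "P (fst q, snd q)" using pq by simp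
        have p2: "P (fst q, snd q')" using q' by (cases q') simp
        have ne2: "snd q \<noteq> snd q'" using ne q' by (cases q, cases q') auto
        have pe2: "pend t (fst q, snd q) = pend t (fst q, snd q')" using q' by (cases q') simp
        have "{p. maximal_path V E s t p} = {(fst q, snd q), (fst q, snd q')}"
          using two_paths(3)[OF p1 p2 ne2 pe2] .
        then have "q \<in> {p. maximal_path V E s t p}" by simp
        then have "q \<in> {(x, a), (x, b)}" using tp(3) by simp
        then show False using h(2,3) ra rb by auto
      qed
    qed
    then have "B q \<in> I" using unique[OF h(1) h(4)] by blast
    then show False using others[OF pq h(2,3)] by simp
  qed
  define \<alpha> where "\<alpha> = f r' / f r"
  have al: "\<alpha> \<noteq> 0" using fr' f(2) by (simp add: \<alpha>_def)
  have Ieq: "I = {(\<lambda>q. c * (B r q + \<alpha> * B r' q)) | c. True}"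
  proof (intro set_eqI iffI)
    fix h assume hI: "h \<in> I"
    have hq: "h q = h r * B r q + h r' * B r' q" for q
      using hz[OF hI, of q] r'(4) by (cases "q = r"; cases "q = r'") (auto simp: basis_elem_def)
    define d where "d = h r' - h r * f r' / f r"
    have kI: "(\<lambda>q. 1 * h q + (- (h r / f r)) * g q) \<in> I" by (rule I_lin[OF hI gI])
    have kq: "1 * h q + (- (h r / f r)) * g q = d * B r' q" for q
      using f(2) hq[of q] by (simp add: gq d_def field_simps)
    have "d = 0"
    proof (rule ccontr)
      assume "d \<noteq> 0"
      have "B r' q = 1 / d * (1 * h q + (- (h r / f r)) * g q)" for q
      proof -
        have "1 / d * (1 * h q + (- (h r / f r)) * g q) = 1 / d * (d * B r' q)" by (simp only: kq)
        then show ?thesis using \<open>d \<noteq> 0\<close> by simp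
      qed
      then have "B r' \<in> I" by (rule I_eq[OF I_smult[OF kI]])
      then show False using nr' by simp
    qed
    then have "h r' = h r * \<alpha>" using f(2) by (simp add: d_def \<alpha>_def)
    then have "h q = h r * (B r q + \<alpha> * B r' q)" for q
      using hq[of q] by (simp add: algebra_simps)
    then have "h = (\<lambda>q. h r * (B r q + \<alpha> * B r' q))" by (intro ext)
    then show "h \<in> {(\<lambda>q. c * (B r q + \<alpha> * B r' q)) | c. True}" by blast
  next
    fix h assume "h \<in> {(\<lambda>q. c * (B r q + \<alpha> * B r' q)) | c. True}"
    then obtain c where c: "h = (\<lambda>q. c * (B r q + \<alpha> * B r' q))" by blast
    show "h \<in> I" unfolding c using f(2)
      by (intro I_eq[OF I_smult[OF gI, of "c / f r"]]) (simp add: gq \<alpha>_def field_simps)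
  qed
  have "num_sources V E s t = 1 \<and> (\<exists>w u a. w \<noteq> u \<and> {p. maximal_path V E s t p} = {w, u} \<and> a \<noteq> 0 \<and>
          I = {(\<lambda>r. c * (basis_elem w r + a * basis_elem u r)) | c. True})"
    using tp(1) tp(3) ra rb r'(4) al Ieq by (intro conjI exI[of _ r] exI[of _ r'] exI[of _ \<alpha>]) auto
  then show False using notb by blast
qed

lemma main:
  assumes notb: "\<not> (num_sources V E s t = 1 \<and> (\<exists>w u a. w \<noteq> u \<and> {p. maximal_path V E s t p} = {w, u} \<and> a \<noteq> 0 \<and>
          I = {(\<lambda>r. c * (basis_elem w r + a * basis_elem u r)) | c. True}))"
  shows "linearized_semigroup_ideal V E s t I"
  unfolding linearized_semigroup_ideal_def
proof (intro exI[of _ "{p. P p \<and> B p \<in> I}"] conjI ballI allI impI)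
  fix p assume "p \<in> {p. P p \<and> B p \<in> I}" then show "P p" by simp
next
  fix w \<alpha> \<beta> assume w: "w \<in> {p. P p \<and> B p \<in> I}"
    and h: "P \<alpha> \<and> P \<beta> \<and> pend t \<alpha> = pstart w \<and> pend t w = pstart \<beta>"
  have "B (pcat (pcat \<alpha> w) \<beta>) \<in> I" using I_ext w h by (simp add: pstart_def)
  moreover have "P (pcat (pcat \<alpha> w) \<beta>)"
  proof (rule pcat_path[OF pcat_path])
    show "P \<alpha>" "P w" "pend t \<alpha> = fst w" "P \<beta>" using w h by (auto simp: pstart_def)
    show "pend t (pcat \<alpha> w) = fst \<beta>" using h
      by (cases \<alpha>, cases w) (simp add: pcat_def pend_app pstart_def)
  qed
  ultimately show "pcat (pcat \<alpha> w) \<beta> \<in> {p. P p \<and> B p \<in> I}" by simp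
next
  show "I = {f \<in> path_alg V E s t. \<forall>r. f r \<noteq> 0 \<longrightarrow> r \<in> {p. P p \<and> B p \<in> I}}"
  proof (intro set_eqI iffI)
    fix f assume fI: "f \<in> I"
    have "P r" if "f r \<noteq> 0" for r using that I_alg[OF fI] unfolding path_alg_def by blast
    then show "f \<in> {f \<in> path_alg V E s t. \<forall>r. f r \<noteq> 0 \<longrightarrow> r \<in> {p. P p \<and> B p \<in> I}}"
      using I_alg[OF fI] key[OF notb fI] by auto
  next
    fix f :: "'v \<times> 'e list \<Rightarrow> 'k" assume f: "f \<in> {f \<in> path_alg V E s t. \<forall>r. f r \<noteq> 0 \<longrightarrow> r \<in> {p. P p \<and> B p \<in> I}}"
    define F where "F = {p. f p \<noteq> 0}"
    have fin: "finite F" using f by (simp add: path_alg_def F_def)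
    have FB: "\<forall>p\<in>F. B p \<in> I" using f by (auto simp: F_def)
    have sI: "(\<lambda>r. \<Sum>p\<in>F. f p * B p r) \<in> I" by (rule I_sum[OF fin FB])
    show "f \<in> I"
    proof (rule I_eq[OF sI])
      fix r
      have "(\<Sum>p\<in>F. f p * B p r) = (\<Sum>p\<in>F. if p = r then f r else 0)"
        by (rule sum.cong) (auto simp: basis_elem_def)
      also have "\<dots> = f r" using fin by (simp add: F_def)
      finally show "f r = (\<Sum>p\<in>F. f p * B p r)" by simp
    qed
  qed
qed

end


lemma sucmod_inj:
  fixes j1 j2 n :: nat
  assumes "j1 < n" "j2 < n" "Suc j1 mod n = Suc j2 mod n"
  shows "j1 = j2"
proof -
  have h: "Suc j mod n = (if Suc j = n then 0 else Suc j)" if "j < n" for j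
    using that by (auto simp: mod_Suc)
  show ?thesis using assms h[OF assms(1)] h[OF assms(2)] by (auto split: if_splits)
qed

lemma adm_cq:
  assumes "admissible_orientation V E s t n"
  shows "cq V E s t"
proof -
  from assms obtain vv aa where
    fin: "finite V" "card V = n" and
    bv: "bij_betw vv {..<n} V" and ba: "bij_betw aa {..<n} E" and
    ends: "\<forall>i<n. {s (aa i), t (aa i)} = {vv i, vv (Suc i mod n)}" and
    noc: "no_oriented_cycle V E s t" and src: "\<exists>x. source_vertex V E s t x"
    by (auto simp: admissible_orientation_def underlying_cycle_def)
  have npos: "n > 0" using src fin by (auto simp: source_vertex_def card_gt_0_iff)
  have Ea: "e \<in> E \<Longrightarrow> \<exists>i<n. e = aa i" for e using ba by (auto simp: bij_betw_def)
  have vvV: "i < n \<Longrightarrow> vv i \<in> V" for i using bv by (auto simp: bij_betw_def)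
  have smod: "Suc i mod n < n" for i using npos by simp
  have aaE: "i < n \<Longrightarrow> aa i \<in> E" for i using ba by (auto simp: bij_betw_def)
  have acyc: "is_path V E s t (x, es) \<Longrightarrow> es \<noteq> [] \<Longrightarrow> pend t (x, es) \<noteq> x" for x es
    using noc by (auto simp: no_oriented_cycle_def pstart_def)
  have sV: "e \<in> E \<Longrightarrow> s e \<in> V" for e
  proof -
    assume "e \<in> E" then obtain i where "i < n" "e = aa i" using Ea by blast
    then have "s e \<in> {vv i, vv (Suc i mod n)}" using ends[rule_format, OF \<open>i < n\<close>] by auto
    then show ?thesis using vvV[OF \<open>i < n\<close>] vvV[OF smod] by auto
  qed
  have tV: "e \<in> E \<Longrightarrow> t e \<in> V" for e
  proof -
    assume "e \<in> E" then obtain i where "i < n" "e = aa i" using Ea by blast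
    then have "t e \<in> {vv i, vv (Suc i mod n)}" using ends[rule_format, OF \<open>i < n\<close>] by auto
    then show ?thesis using vvV[OF \<open>i < n\<close>] vvV[OF smod] by auto
  qed
  have st: "e \<in> E \<Longrightarrow> s e \<noteq> t e" for e
  proof -
    assume e: "e \<in> E"
    have "is_path V E s t (s e, [e])" using e sV by (auto simp: is_path_def)
    then have "pend t (s e, [e]) \<noteq> s e" using acyc by blast
    then show ?thesis by (simp add: pend_def)
  qed
  have inj: "inj_on vv {..<n}" using bv by (auto simp: bij_betw_def)
  have incv: "j < n \<Longrightarrow> i < n \<Longrightarrow> (s (aa j) = vv i \<or> t (aa j) = vv i) \<Longrightarrow> i = j \<or> i = Suc j mod n" for i j
  proof -
    assume h: "j < n" "i < n" "s (aa j) = vv i \<or> t (aa j) = vv i"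
    have "vv i \<in> {s (aa j), t (aa j)}" using h(3) by auto
    then have "vv i \<in> {vv j, vv (Suc j mod n)}" using ends[rule_format, OF h(1)] by simp
    then have "vv i = vv j \<or> vv i = vv (Suc j mod n)" by simp
    then show ?thesis
    proof
      assume a: "vv i = vv j"
      have "i = j" by (rule inj_onD[OF inj a]) (use h in auto)
      then show ?thesis by simp
    next
      assume a: "vv i = vv (Suc j mod n)"
      have "i = Suc j mod n" by (rule inj_onD[OF inj a]) (use h smod[of j] in auto)
      then show ?thesis by simp
    qed
  qed
  have three: "v \<in> V \<Longrightarrow> e1 \<in> E \<Longrightarrow> e2 \<in> E \<Longrightarrow> e3 \<in> E \<Longrightarrow>
       (s e1 = v \<or> t e1 = v) \<Longrightarrow> (s e2 = v \<or> t e2 = v) \<Longrightarrow> (s e3 = v \<or> t e3 = v) \<Longrightarrow>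
       e1 = e2 \<or> e1 = e3 \<or> e2 = e3" for v e1 e2 e3
  proof -
    assume h: "v \<in> V" "e1 \<in> E" "e2 \<in> E" "e3 \<in> E"
       "s e1 = v \<or> t e1 = v" "s e2 = v \<or> t e2 = v" "s e3 = v \<or> t e3 = v"
    obtain i where i: "i < n" "v = vv i" using h(1) bv by (auto simp: bij_betw_def)
    obtain j1 where j1: "j1 < n" "e1 = aa j1" using Ea h(2) by blast
    obtain j2 where j2: "j2 < n" "e2 = aa j2" using Ea h(3) by blast
    obtain j3 where j3: "j3 < n" "e3 = aa j3" using Ea h(4) by blast
    have c1: "i = j1 \<or> i = Suc j1 mod n" using incv[OF j1(1) i(1)] h(5) i j1 by simp
    have c2: "i = j2 \<or> i = Suc j2 mod n" using incv[OF j2(1) i(1)] h(6) i j2 by simp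
    have c3: "i = j3 \<or> i = Suc j3 mod n" using incv[OF j3(1) i(1)] h(7) i j3 by simp
    have s12: "Suc j1 mod n = Suc j2 mod n \<Longrightarrow> j1 = j2" by (rule sucmod_inj[OF j1(1) j2(1)])
    have s13: "Suc j1 mod n = Suc j3 mod n \<Longrightarrow> j1 = j3" by (rule sucmod_inj[OF j1(1) j3(1)])
    have s23: "Suc j2 mod n = Suc j3 mod n \<Longrightarrow> j2 = j3" by (rule sucmod_inj[OF j2(1) j3(1)])
    have q: "(i = ja) = (i = jb) \<Longrightarrow> (i = ja \<or> i = Suc ja mod n) \<Longrightarrow> (i = jb \<or> i = Suc jb mod n)
        \<Longrightarrow> (Suc ja mod n = Suc jb mod n \<Longrightarrow> ja = jb) \<Longrightarrow> ja = jb" for ja jb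
    proof -
      assume a: "(i = ja) = (i = jb)" "i = ja \<or> i = Suc ja mod n" "i = jb \<or> i = Suc jb mod n"
        "Suc ja mod n = Suc jb mod n \<Longrightarrow> ja = jb"
      show "ja = jb"
      proof (cases "i = ja")
        case True then show ?thesis using a(1) by simp
      next
        case False
        then have "i = Suc ja mod n" "i = Suc jb mod n" using a(1,2,3) by blast+
        then show ?thesis using a(4) by simp
      qed
    qed
    have "(i = j1) = (i = j2) \<or> (i = j1) = (i = j3) \<or> (i = j2) = (i = j3)" by blast
    then have "j1 = j2 \<or> j1 = j3 \<or> j2 = j3"
      using q[OF _ c1 c2 s12] q[OF _ c1 c3 s13] q[OF _ c2 c3 s23] by blast
    then show ?thesis using j1 j2 j3 by auto
  qed
  have conn: "S \<subseteq> V \<Longrightarrow> S \<noteq> {} \<Longrightarrow> (\<forall>e\<in>E. s e \<in> S \<longleftrightarrow> t e \<in> S) \<Longrightarrow> S = V" for S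
  proof -
    assume h: "S \<subseteq> V" "S \<noteq> {}" "\<forall>e\<in>E. s e \<in> S \<longleftrightarrow> t e \<in> S"
    obtain v where v: "v \<in> S" using h(2) by blast
    then obtain i0 where i0: "i0 < n" "v = vv i0" using h(1) bv by (auto simp: bij_betw_def)
    have step: "vv k \<in> S \<Longrightarrow> k < n \<Longrightarrow> vv (Suc k mod n) \<in> S" for k
    proof -
      assume k: "vv k \<in> S" "k < n"
      have e: "{s (aa k), t (aa k)} = {vv k, vv (Suc k mod n)}" using ends[rule_format, OF k(2)] .
      have both: "s (aa k) \<in> S \<and> t (aa k) \<in> S" using h(3) aaE[OF k(2)] e k(1)
        by (metis doubleton_eq_iff insertI1)
      have "vv (Suc k mod n) \<in> {s (aa k), t (aa k)}" unfolding e by simp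
      then show "vv (Suc k mod n) \<in> S" using both by auto
    qed
    have all: "vv ((i0 + m) mod n) \<in> S" for m
    proof (induction m)
      case 0 then show ?case using v i0 by simp
    next
      case (Suc m)
      have "vv (Suc ((i0 + m) mod n) mod n) \<in> S" using step[OF Suc] npos by simp
      then show ?case by (simp add: mod_Suc_eq)
    qed
    show "S = V"
    proof
      show "V \<subseteq> S"
      proof
        fix w assume "w \<in> V"
        then obtain i where i: "i < n" "w = vv i" using bv by (auto simp: bij_betw_def)
        have "(i0 + (n - i0 + i)) mod n = i" using i0 i by simp
        then show "w \<in> S" using all[of "n - i0 + i"] i by simp
      qed
    qed (use h in auto)
  qed
  show ?thesis
  proof (unfold_locales)
    show "\<And>e. e \<in> E \<Longrightarrow> s e \<in> V" by (rule sV)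
    show "\<And>e. e \<in> E \<Longrightarrow> t e \<in> V" by (rule tV)
    show "\<And>e. e \<in> E \<Longrightarrow> s e \<noteq> t e" by (rule st)
    show "\<And>v e1 e2 e3. v \<in> V \<Longrightarrow> e1 \<in> E \<Longrightarrow> e2 \<in> E \<Longrightarrow> e3 \<in> E \<Longrightarrow>
       (s e1 = v \<or> t e1 = v) \<Longrightarrow> (s e2 = v \<or> t e2 = v) \<Longrightarrow> (s e3 = v \<or> t e3 = v) \<Longrightarrow>
       e1 = e2 \<or> e1 = e3 \<or> e2 = e3" by (rule three)
    show "\<And>S. S \<subseteq> V \<Longrightarrow> S \<noteq> {} \<Longrightarrow> (\<forall>e\<in>E. s e \<in> S \<longleftrightarrow> t e \<in> S) \<Longrightarrow> S = V" by (rule conn)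
    show "\<And>x es. is_path V E s t (x, es) \<Longrightarrow> es \<noteq> [] \<Longrightarrow> pend t (x, es) \<noteq> x" by (rule acyc)
  qed
qed

theorem proposition6:
  fixes V :: "'v set" and E :: "'e set" and s t :: "'e \<Rightarrow> 'v" and n :: nat
    and I :: "('v \<times> 'e list \<Rightarrow> 'k::field) set"
  assumes "alg_closed_field TYPE('k)"
    and "admissible_orientation V E s t n"
    and "two_sided_ideal V E s t I"
  shows "linearized_semigroup_ideal V E s t I \<longleftrightarrow>
    \<not> (num_sources V E s t = 1 \<and>
       (\<exists>w u a. w \<noteq> u \<and> {p. maximal_path V E s t p} = {w, u} \<and> a \<noteq> 0 \<and>
          I = {(\<lambda>r. c * (basis_elem w r + a * basis_elem u r)) | c. True}))"
proof -
  interpret cq V E s t by (rule adm_cq[OF assms(2)])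
  interpret cqi V E s t I by unfold_locales (rule assms(3))
  show ?thesis
  proof
    assume L: "linearized_semigroup_ideal V E s t I"
    then obtain X where X: "\<forall>p\<in>X. P p" "I = {f \<in> path_alg V E s t. \<forall>r. f r \<noteq> 0 \<longrightarrow> r \<in> X}"
      by (auto simp: linearized_semigroup_ideal_def)
    show "\<not> (num_sources V E s t = 1 \<and>
       (\<exists>w u a. w \<noteq> u \<and> {p. maximal_path V E s t p} = {w, u} \<and> a \<noteq> 0 \<and>
          I = {(\<lambda>r. c * (basis_elem w r + a * basis_elem u r)) | c. True}))"
    proof
      assume "num_sources V E s t = 1 \<and>
       (\<exists>w u a. w \<noteq> u \<and> {p. maximal_path V E s t p} = {w, u} \<and> a \<noteq> 0 \<and>
          I = {(\<lambda>r. c * (basis_elem w r + a * basis_elem u r)) | c. True})"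
      then obtain w u a where wu: "w \<noteq> u" "{p. maximal_path V E s t p} = {w, u}" "a \<noteq> 0"
        and Ieq: "I = {(\<lambda>r. c * (basis_elem w r + a * basis_elem u r)) | c. True}" by blast
      have "(\<lambda>r. 1 * (basis_elem w r + a * basis_elem u r)) \<in> I" using Ieq by blast
      then have "(\<lambda>r. 1 * (basis_elem w r + a * basis_elem u r)) w \<noteq> 0 \<longrightarrow> w \<in> X"
        using X(2) by blast
      then have wX: "w \<in> X" using wu(1) by (simp add: basis_elem_def)
      have pw: "P w" using wu(2) by (auto simp: maximal_path_def)
      have "B w \<in> path_alg V E s t" by (rule basis_in[OF pw])
      moreover have "\<forall>r. (B w r :: 'k) \<noteq> 0 \<longrightarrow> r \<in> X" using wX by (simp add: basis_elem_def)
      ultimately have "(B w :: _ \<Rightarrow> 'k) \<in> I" using X(2) by blast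
      then obtain c where c: "(B w :: _ \<Rightarrow> 'k) = (\<lambda>r. c * (basis_elem w r + a * basis_elem u r))"
        using Ieq by blast
      have "c = 1" using fun_cong[OF c, of w] wu(1) by (simp add: basis_elem_def)
      moreover have "0 = c * a" using fun_cong[OF c, of u] wu(1) by (simp add: basis_elem_def)
      ultimately show False using wu(3) by simp
    qed
  next
    assume "\<not> (num_sources V E s t = 1 \<and>
       (\<exists>w u a. w \<noteq> u \<and> {p. maximal_path V E s t p} = {w, u} \<and> a \<noteq> 0 \<and>
          I = {(\<lambda>r. c * (basis_elem w r + a * basis_elem u r)) | c. True}))"
    then show "linearized_semigroup_ideal V E s t I" by (rule main)
  qed
qed


end
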